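(* Let $X\neq\emptyset$ be a set and let $\Phi$ be a nonempty set of bounded functions $X\to\mathbb{R}$. Let $\tau_{D_X}$ be the topology on $X$ induced by the extended pseudo-metric $D_X$, and let $\tau_{\mathrm{in}}$ be the initial topology on $X$ with respect to $\Phi$ (the coarsest topology making every $\varphi\in\Phi$ continuous, $\mathbb{R}$ carrying the Euclidean topology). Then $\tau_{D_X}$ is finer than $\tau_{\mathrm{in}}$. Moreover, if $\Phi$ is totally bounded with respect to $D_\Phi$, then $\tau_{D_X}=\tau_{\mathrm{in}}$.
   Context: $D_\Phi(\varphi_1,\varphi_2):=\|\varphi_1-\varphi_2\|_\infty=\sup_{x\in X}|\varphi_1(x)-\varphi_2(x)|$ for $\varphi_1,\varphi_2\in\Phi$. The extended pseudo-metric $D_X$ on $X$ is $D_X(x_1,x_2):=\sup_{\varphi\in\Phi}|\varphi(x_1)-\varphi(x_2)|$; its topology $\tau_{D_X}$ has as a base the balls $B_X(x,\varepsilon)=\{x'\in X: D_X(x,x')<\varepsilon\}$, $x\in X$, $\varepsilon>0$. *)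

theory Defs
  imports "HOL-Analysis.Analysis"
begin

definition D_Phi :: "'a set \<Rightarrow> ('a \<Rightarrow> real) \<Rightarrow> ('a \<Rightarrow> real) \<Rightarrow> real" where
  "D_Phi X f g = (SUP x\<in>X. \<bar>f x - g x\<bar>)"

definition D_X :: "('a \<Rightarrow> real) set \<Rightarrow> 'a \<Rightarrow> 'a \<Rightarrow> ereal" where
  "D_X Phi x y = (SUP \<phi>\<in>Phi. ereal \<bar>\<phi> x - \<phi> y\<bar>)"

definition ball_X :: "'a set \<Rightarrow> ('a \<Rightarrow> real) set \<Rightarrow> 'a \<Rightarrow> real \<Rightarrow> 'a set" where
  "ball_X X Phi x e = {x' \<in> X. D_X Phi x x' < ereal e}"

definition tau_DX :: "'a set \<Rightarrow> ('a \<Rightarrow> real) set \<Rightarrow> 'a topology" where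
  "tau_DX X Phi = topology_generated_by {ball_X X Phi x e | x e. x \<in> X \<and> e > 0}"

definition tau_in :: "'a set \<Rightarrow> ('a \<Rightarrow> real) set \<Rightarrow> 'a topology" where
  "tau_in X Phi = topology_generated_by {X \<inter> \<phi> -` U | \<phi> U. \<phi> \<in> Phi \<and> open U}"

definition totally_bounded_DPhi :: "'a set \<Rightarrow> ('a \<Rightarrow> real) set \<Rightarrow> bool" where
  "totally_bounded_DPhi X Phi \<longleftrightarrow>
     (\<forall>e>0. \<exists>F. finite F \<and> F \<subseteq> Phi \<and> Phi \<subseteq> (\<Union>f\<in>F. {g \<in> Phi. D_Phi X f g < e}))"

end

theory Submission
  imports Defs
begin

lemma gen_sub:
  assumes "\<And>s. s \<in> S \<Longrightarrow> openin T s" "openin (topology_generated_by S) U"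
  shows "openin T U"
  using generate_topology_on_coarsest[of "openin T" S U] assms
  by (auto simp: openin_topology_generated_by_iff)

lemma DX_le:
  assumes "\<phi> \<in> Phi"
  shows "ereal \<bar>\<phi> x - \<phi> y\<bar> \<le> D_X Phi x y"
  unfolding D_X_def using assms by (auto intro: SUP_upper)

lemma DPhi_le:
  assumes "bounded (f ` X)" "bounded (g ` X)" "z \<in> X"
  shows "\<bar>f z - g z\<bar> \<le> D_Phi X f g"
proof -
  obtain B1 where B1: "\<forall>x\<in>X. \<bar>f x\<bar> \<le> B1" using assms(1) unfolding bounded_iff by auto
  obtain B2 where B2: "\<forall>x\<in>X. \<bar>g x\<bar> \<le> B2" using assms(2) unfolding bounded_iff by auto
  have "bdd_above ((\<lambda>x. \<bar>f x - g x\<bar>) ` X)"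
  proof (rule bdd_aboveI2[where M="B1+B2"])
    fix x assume "x \<in> X"
    then have "\<bar>f x\<bar> \<le> B1" "\<bar>g x\<bar> \<le> B2" using B1 B2 by auto
    then show "\<bar>f x - g x\<bar> \<le> B1 + B2" by arith
  qed
  then show ?thesis unfolding D_Phi_def by (rule cSUP_upper[OF assms(3)])
qed

lemma ballX_center:
  assumes "x \<in> X" "e > 0" "Phi \<noteq> {}"
  shows "x \<in> ball_X X Phi x e"
proof -
  have "D_X Phi x x = 0" unfolding D_X_def using assms(3) by simp
  then show ?thesis using assms unfolding ball_X_def by auto
qed

lemma gen_inter:
  assumes "finite F" "F \<subseteq> Phi" "Phi \<noteq> {}" "\<And>f. f \<in> F \<Longrightarrow> open (V f)"
  shows "openin (tau_in X Phi) (X \<inter> (\<Inter>f\<in>F. f -` V f))"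
  using assms
proof (induction F rule: finite_induct)
  case empty
  obtain \<phi> where "\<phi> \<in> Phi" using empty by auto
  then have "X \<inter> \<phi> -` UNIV \<in> {X \<inter> \<phi> -` U | \<phi> U. \<phi> \<in> Phi \<and> open U}" by blast
  then have "openin (tau_in X Phi) (X \<inter> \<phi> -` UNIV)"
    unfolding tau_in_def by (rule topology_generated_by_Basis)
  then show ?case by simp
next
  case (insert f F)
  have a: "openin (tau_in X Phi) (X \<inter> (\<Inter>f\<in>F. f -` V f))" using insert by auto
  have "X \<inter> f -` V f \<in> {X \<inter> \<phi> -` U | \<phi> U. \<phi> \<in> Phi \<and> open U}" using insert by blast
  then have b: "openin (tau_in X Phi) (X \<inter> f -` V f)"
    unfolding tau_in_def by (rule topology_generated_by_Basis)
  have "X \<inter> (\<Inter>g\<in>insert f F. g -` V g) = (X \<inter> f -` V f) \<inter> (X \<inter> (\<Inter>f\<in>F. f -` V f))" by auto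
  then show ?case using openin_Int[OF b a] by simp
qed

theorem mainTheorem1:
  fixes X :: "'a set" and Phi :: "('a \<Rightarrow> real) set"
  assumes "X \<noteq> {}" and "Phi \<noteq> {}"
    and "\<forall>\<phi>\<in>Phi. bounded (\<phi> ` X)"
  shows "(\<forall>U. openin (tau_in X Phi) U \<longrightarrow> openin (tau_DX X Phi) U)
       \<and> (totally_bounded_DPhi X Phi \<longrightarrow> tau_DX X Phi = tau_in X Phi)"
proof -
  have balls_open: "openin (tau_DX X Phi) (ball_X X Phi x e)" if "x \<in> X" "e > 0" for x e
    unfolding tau_DX_def by (rule topology_generated_by_Basis) (use that in blast)
  have P1: "openin (tau_DX X Phi) s" if hs: "s \<in> {X \<inter> \<phi> -` U | \<phi> U. \<phi> \<in> Phi \<and> open U}" for s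
  proof -
    obtain \<phi> U where s: "s = X \<inter> \<phi> -` U" "\<phi> \<in> Phi" "open U" using hs by auto
    show ?thesis
    proof (rule openin_subopen[THEN iffD2], intro ballI)
      fix x assume x: "x \<in> s"
      then have "\<phi> x \<in> U" using s(1) by auto
      then obtain e where e: "e > 0" "ball (\<phi> x) e \<subseteq> U" using s(3) open_contains_ball by blast
      have "ball_X X Phi x e \<subseteq> s"
      proof
        fix y assume y: "y \<in> ball_X X Phi x e"
        then have "D_X Phi x y < ereal e" unfolding ball_X_def by simp
        then have "ereal \<bar>\<phi> x - \<phi> y\<bar> < ereal e"
          by (rule order_le_less_trans[OF DX_le[OF s(2)]])
        then have "\<phi> y \<in> ball (\<phi> x) e" by (simp add: dist_real_def)
        then show "y \<in> s" using y e s unfolding ball_X_def by auto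
      qed
      then show "\<exists>T. openin (tau_DX X Phi) T \<and> x \<in> T \<and> T \<subseteq> s"
        using balls_open[of x e] ballX_center[of x X e Phi] x s e assms(2) by blast
    qed
  qed
  have part1: "\<forall>U. openin (tau_in X Phi) U \<longrightarrow> openin (tau_DX X Phi) U"
    using gen_sub[OF P1] unfolding tau_in_def by blast
  have part2: "tau_DX X Phi = tau_in X Phi" if tb: "totally_bounded_DPhi X Phi"
  proof -
    have P2: "openin (tau_in X Phi) s" if hs: "s \<in> {ball_X X Phi x e | x e. x \<in> X \<and> e > 0}" for s
    proof -
      obtain x0 e where s: "s = ball_X X Phi x0 e" "x0 \<in> X" "e > 0" using hs by auto
      show ?thesis
      proof (rule openin_subopen[THEN iffD2], intro ballI)
        fix x assume x: "x \<in> s"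
        then have xX: "x \<in> X" and dx: "D_X Phi x0 x < ereal e" using x unfolding s(1) ball_X_def by simp_all
        obtain d where d: "D_X Phi x0 x < ereal d" "d < e" using ereal_dense2[OF dx] by auto
        define r where "r = (e - d) / 4"
        have r: "r > 0" using d r_def by simp
        obtain F where F: "finite F" "F \<subseteq> Phi" "Phi \<subseteq> (\<Union>f\<in>F. {g \<in> Phi. D_Phi X f g < r})"
          using tb[unfolded totally_bounded_DPhi_def, rule_format, OF r] by (elim exE conjE) simp
        define V where "V = X \<inter> (\<Inter>f\<in>F. f -` ball (f x) r)"
        have Vo: "openin (tau_in X Phi) V" unfolding V_def
          by (rule gen_inter) (use F assms(2) in auto)
        have xV: "x \<in> V" unfolding V_def using xX r by auto
        have "V \<subseteq> s"
        proof
          fix y assume y: "y \<in> V"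
          have yX: "y \<in> X" using y V_def by auto
          have "\<forall>\<phi>\<in>Phi. \<bar>\<phi> x0 - \<phi> y\<bar> \<le> d + 3*r"
          proof
            fix \<phi> assume ph: "\<phi> \<in> Phi"
            obtain f where f: "f \<in> F" "D_Phi X f \<phi> < r" using F(3) ph by (auto simp only: subset_iff UN_iff mem_Collect_eq)
            have fb: "bounded (f ` X)" using f F assms(3) by auto
            have pb: "bounded (\<phi> ` X)" using ph assms(3) by auto
            have 1: "\<bar>f x - \<phi> x\<bar> < r" using DPhi_le[OF fb pb xX] f by linarith
            have 2: "\<bar>f y - \<phi> y\<bar> < r" using DPhi_le[OF fb pb yX] f by linarith
            have 3: "\<bar>f x - f y\<bar> < r" using y f unfolding V_def by (auto simp: dist_real_def)
            have "ereal \<bar>\<phi> x0 - \<phi> x\<bar> < ereal d" by (rule order_le_less_trans[OF DX_le[OF ph] d(1)])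
            then have 4: "\<bar>\<phi> x0 - \<phi> x\<bar> < d" by simp
            show "\<bar>\<phi> x0 - \<phi> y\<bar> \<le> d + 3*r" using 1 2 3 4 by linarith
          qed
          then have "D_X Phi x0 y \<le> ereal (d + 3*r)" unfolding D_X_def
            by (auto intro!: SUP_least)
          also have "\<dots> < ereal e" using r_def d by simp
          finally show "y \<in> s" using s yX unfolding ball_X_def by auto
        qed
        then show "\<exists>T. openin (tau_in X Phi) T \<and> x \<in> T \<and> T \<subseteq> s" using Vo xV by blast
      qed
    qed
    have "openin (tau_DX X Phi) U \<longleftrightarrow> openin (tau_in X Phi) U" for U
      using gen_sub[OF P2] part1 unfolding tau_DX_def by blast
    then show ?thesis by (simp add: topology_eq)
  qed
  show ?thesis using part1 part2 by blast
qed

end
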